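(* Let $G$ be a periodic locally nilpotent group. If $G$ contains a finite contranormal subgroup, then the $\mathcal{F}$-perfect part $\mathcal{F}(G)$ of $G$ has finite index in $G$.
   Context: A subgroup $H$ of $G$ is contranormal in $G$ if its normal closure $H^G$ equals $G$. A group is $\mathcal{F}$-perfect if it has no proper subgroup of finite index. The $\mathcal{F}$-perfect part $\mathcal{F}(G)$ of $G$ is the subgroup generated by all $\mathcal{F}$-perfect subgroups of $G$; it is itself $\mathcal{F}$-perfect and is the largest $\mathcal{F}$-perfect subgroup of $G$. *)

theory Defs
  imports "HOL-Algebra.Algebra"
begin

definition comm_subgroup :: "('a, 'b) monoid_scheme \<Rightarrow> 'a set \<Rightarrow> 'a set \<Rightarrow> 'a set" where
  "comm_subgroup G H K = generate G {h \<otimes>\<^bsub>G\<^esub> k \<otimes>\<^bsub>G\<^esub> inv\<^bsub>G\<^esub> h \<otimes>\<^bsub>G\<^esub> inv\<^bsub>G\<^esub> k | h k. h \<in> H \<and> k \<in> K}"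

(* lower central series: gamma_1 = G (index 0 here), gamma_{i+1} = [gamma_i, G] *)
fun lower_central :: "('a, 'b) monoid_scheme \<Rightarrow> nat \<Rightarrow> 'a set" where
  "lower_central G 0 = carrier G"
| "lower_central G (Suc n) = comm_subgroup G (lower_central G n) (carrier G)"

definition nilpotent_group :: "('a, 'b) monoid_scheme \<Rightarrow> bool" where
  "nilpotent_group G \<longleftrightarrow> group G \<and> (\<exists>n. lower_central G n = {\<one>\<^bsub>G\<^esub>})"

definition locally_nilpotent :: "('a, 'b) monoid_scheme \<Rightarrow> bool" where
  "locally_nilpotent G \<longleftrightarrow> (\<forall>S. S \<subseteq> carrier G \<and> finite S \<longrightarrow> nilpotent_group (subgroup_generated G S))"

definition periodic_group :: "('a, 'b) monoid_scheme \<Rightarrow> bool" where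
  "periodic_group G \<longleftrightarrow> (\<forall>x \<in> carrier G. \<exists>n::nat. n > 0 \<and> x [^]\<^bsub>G\<^esub> n = \<one>\<^bsub>G\<^esub>)"

definition normal_closure :: "('a, 'b) monoid_scheme \<Rightarrow> 'a set \<Rightarrow> 'a set" where
  "normal_closure G H = generate G {g \<otimes>\<^bsub>G\<^esub> h \<otimes>\<^bsub>G\<^esub> inv\<^bsub>G\<^esub> g | g h. g \<in> carrier G \<and> h \<in> H}"

definition contranormal :: "('a, 'b) monoid_scheme \<Rightarrow> 'a set \<Rightarrow> bool" where
  "contranormal G H \<longleftrightarrow> subgroup H G \<and> normal_closure G H = carrier G"

definition finite_index_in :: "('a, 'b) monoid_scheme \<Rightarrow> 'a set \<Rightarrow> 'a set \<Rightarrow> bool" where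
  "finite_index_in G K H \<longleftrightarrow> finite {K #>\<^bsub>G\<^esub> h | h. h \<in> H}"

definition F_perfect :: "('a, 'b) monoid_scheme \<Rightarrow> 'a set \<Rightarrow> bool" where
  "F_perfect G H \<longleftrightarrow> subgroup H G \<and>
     (\<forall>K. subgroup K G \<and> K \<subseteq> H \<and> finite_index_in G K H \<longrightarrow> K = H)"

definition F_perfect_part :: "('a, 'b) monoid_scheme \<Rightarrow> 'a set" where
  "F_perfect_part G = generate G (\<Union>{H. F_perfect G H})"

end

theory Submission
  imports Defs
begin

definition conjc :: "('a, 'b) monoid_scheme \<Rightarrow> 'a set \<Rightarrow> bool" where
  "conjc G N \<longleftrightarrow> (\<forall>g\<in>carrier G. \<forall>n\<in>N. g \<otimes>\<^bsub>G\<^esub> n \<otimes>\<^bsub>G\<^esub> inv\<^bsub>G\<^esub> g \<in> N)"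

context group begin

lemma canc1 [simp]: "x \<in> carrier G \<Longrightarrow> z \<in> carrier G \<Longrightarrow> x \<otimes> (inv x \<otimes> z) = z"
  by (simp add: m_assoc[symmetric])
lemma canc2 [simp]: "x \<in> carrier G \<Longrightarrow> z \<in> carrier G \<Longrightarrow> inv x \<otimes> (x \<otimes> z) = z"
  by (simp add: m_assoc[symmetric])

lemma rcos_eq_iff:
  assumes "subgroup N G" "x \<in> carrier G" "y \<in> carrier G"
  shows "(N #> x = N #> y) = (y \<otimes> inv x \<in> N)"
proof
  assume "N #> x = N #> y"
  then have "y \<in> N #> x" using rcos_self[OF assms(3,1)] by simp
  then show "y \<otimes> inv x \<in> N" using subgroup.rcos_module_imp[OF assms(1) is_group assms(2)] by blast
next
  assume "y \<otimes> inv x \<in> N"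
  then have "y \<in> N #> x" using subgroup.rcos_module_rev[OF assms(1) is_group assms(2,3)] by blast
  then show "N #> x = N #> y" using repr_independence[OF _ assms(2,1)] by blast
qed

lemma fin_index_crit:
  assumes M: "subgroup M G" and fin: "finite (\<phi> ` carrier G)"
    and eq: "\<And>x y. x \<in> carrier G \<Longrightarrow> y \<in> carrier G \<Longrightarrow> \<phi> x = \<phi> y \<Longrightarrow> y \<otimes> inv x \<in> M"
  shows "finite_index_in G M (carrier G)"
proof -
  define r where "r v = (SOME x. x \<in> carrier G \<and> \<phi> x = v)" for v
  have "{M #> h | h. h \<in> carrier G} \<subseteq> (\<lambda>v. M #> r v) ` (\<phi> ` carrier G)"
  proof
    fix c assume "c \<in> {M #> h | h. h \<in> carrier G}"
    then obtain h where h: "h \<in> carrier G" "c = M #> h" by blast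
    have "\<exists>x. x \<in> carrier G \<and> \<phi> x = \<phi> h" using h by blast
    then have rh: "r (\<phi> h) \<in> carrier G" "\<phi> (r (\<phi> h)) = \<phi> h"
      unfolding r_def by (metis (mono_tags, lifting) someI_ex)+
    then have "h \<otimes> inv (r (\<phi> h)) \<in> M" using eq h by blast
    then have "M #> r (\<phi> h) = M #> h" using rcos_eq_iff[OF M rh(1) h(1)] by simp
    then show "c \<in> (\<lambda>v. M #> r v) ` (\<phi> ` carrier G)" using h by blast
  qed
  then show ?thesis unfolding finite_index_in_def using fin finite_subset by blast
qed

lemma subgroup_prod:
  assumes A: "subgroup A G" and N: "subgroup N G" and c: "conjc G N"
  shows "subgroup {a \<otimes> n | a n. a \<in> A \<and> n \<in> N} G"
proof (rule subgroupI)
  show "{a \<otimes> n | a n. a \<in> A \<and> n \<in> N} \<subseteq> carrier G"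
    using A N by (auto dest: subgroup.mem_carrier)
  show "{a \<otimes> n | a n. a \<in> A \<and> n \<in> N} \<noteq> {}"
    using A N subgroup.one_closed by fastforce
next
  fix x assume "x \<in> {a \<otimes> n | a n. a \<in> A \<and> n \<in> N}"
  then obtain a n where an: "a \<in> A" "n \<in> N" "x = a \<otimes> n" by blast
  have ac: "a \<in> carrier G" and nc: "n \<in> carrier G" using an A N subgroup.mem_carrier by metis+
  have "inv x = inv a \<otimes> (a \<otimes> inv n \<otimes> inv a)"
    using ac nc an(3) by (simp add: inv_mult_group m_assoc[symmetric])
  moreover have "a \<otimes> inv n \<otimes> inv a \<in> N"
    using c ac an(2) N unfolding conjc_def by (simp add: subgroup.m_inv_closed)
  moreover have "inv a \<in> A" using A an by (simp add: subgroup.m_inv_closed)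
  ultimately show "inv x \<in> {a \<otimes> n | a n. a \<in> A \<and> n \<in> N}" by blast
next
  fix x y assume "x \<in> {a \<otimes> n | a n. a \<in> A \<and> n \<in> N}" "y \<in> {a \<otimes> n | a n. a \<in> A \<and> n \<in> N}"
  then obtain a n b m where an: "a \<in> A" "n \<in> N" "x = a \<otimes> n" "b \<in> A" "m \<in> N" "y = b \<otimes> m" by blast
  have ac: "a \<in> carrier G" "b \<in> carrier G" and nc: "n \<in> carrier G" "m \<in> carrier G"
    using an A N subgroup.mem_carrier by metis+
  have "x \<otimes> y = (a \<otimes> b) \<otimes> ((inv b \<otimes> n \<otimes> inv (inv b)) \<otimes> m)"
    using ac nc an by (simp add: m_assoc)
  moreover have "inv b \<otimes> n \<otimes> inv (inv b) \<in> N"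
    using c ac an(2) unfolding conjc_def by (metis inv_closed)
  moreover have "a \<otimes> b \<in> A" using A an by (simp add: subgroup.m_closed)
  ultimately show "x \<otimes> y \<in> {a \<otimes> n | a n. a \<in> A \<and> n \<in> N}"
    using N an by (blast intro: subgroup.m_closed)
qed

end

context group begin

lemma reps:
  assumes "finite_index_in G K (carrier G)"
  shows "\<exists>T. finite T \<and> T \<subseteq> carrier G \<and> (\<forall>x\<in>carrier G. \<exists>t\<in>T. K #> x = K #> t)"
proof -
  define R where "R = {K #> h | h. h \<in> carrier G}"
  define rep where "rep c = (SOME t. t \<in> carrier G \<and> c = K #> t)" for c
  have fR: "finite R" using assms unfolding R_def finite_index_in_def by simp
  have rp: "rep c \<in> carrier G \<and> c = K #> rep c" if "c \<in> R" for c
  proof -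
    have "\<exists>t. t \<in> carrier G \<and> c = K #> t" using that unfolding R_def by blast
    then show ?thesis unfolding rep_def by (rule someI_ex)
  qed
  show ?thesis
  proof (intro exI conjI)
    show "finite (rep ` R)" using fR by simp
    show "rep ` R \<subseteq> carrier G" using rp by blast
    show "\<forall>x\<in>carrier G. \<exists>t\<in>rep ` R. K #> x = K #> t"
    proof
      fix x assume x: "x \<in> carrier G"
      then have "K #> x \<in> R" unfolding R_def by blast
      then show "\<exists>t\<in>rep ` R. K #> x = K #> t" using rp by blast
    qed
  qed
qed

end

context group begin
lemma fin_index_Int:
  assumes "subgroup A G" "subgroup B G" "finite_index_in G A (carrier G)" "finite_index_in G B (carrier G)"
  shows "finite_index_in G (A \<inter> B) (carrier G)"
proof (rule fin_index_crit[where \<phi> = "\<lambda>g. (A #> g, B #> g)"])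
  show "subgroup (A \<inter> B) G" using assms subgroups_Inter_pair by blast
  have "(\<lambda>g. (A #> g, B #> g)) ` carrier G \<subseteq> {A #> h | h. h \<in> carrier G} \<times> {B #> h | h. h \<in> carrier G}"
    by blast
  then show "finite ((\<lambda>g. (A #> g, B #> g)) ` carrier G)"
    using assms(3,4) unfolding finite_index_in_def by (meson finite_SigmaI finite_subset)
  fix x y assume "x \<in> carrier G" "y \<in> carrier G" "(A #> x, B #> x) = (A #> y, B #> y)"
  then show "y \<otimes> inv x \<in> A \<inter> B" using rcos_eq_iff assms by auto
qed

lemma fin_index_super:
  assumes "subgroup A G" "subgroup B G" "A \<subseteq> B" "finite_index_in G A (carrier G)"
  shows "finite_index_in G B (carrier G)"
proof (rule fin_index_crit[where \<phi> = "\<lambda>g. A #> g"])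
  show "subgroup B G" by fact
  have "(\<lambda>g. A #> g) ` carrier G = {A #> h | h. h \<in> carrier G}" by blast
  then show "finite ((\<lambda>g. A #> g) ` carrier G)" using assms(4) unfolding finite_index_in_def by simp
  fix x y assume "x \<in> carrier G" "y \<in> carrier G" "A #> x = A #> y"
  then show "y \<otimes> inv x \<in> B" using rcos_eq_iff assms by auto
qed

end

context group begin
lemma fin_index_trans:
  assumes K: "subgroup K G" and N: "subgroup N G" and KN: "K \<subseteq> N"
    and f1: "finite_index_in G K N" and f2: "finite_index_in G N (carrier G)"
  shows "finite_index_in G K (carrier G)"
proof -
  define rep where "rep c = (SOME t. t \<in> carrier G \<and> c = N #> t)" for c
  have rp: "rep (N #> g) \<in> carrier G \<and> N #> g = N #> rep (N #> g)" if "g \<in> carrier G" for g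
  proof -
    have "\<exists>t. t \<in> carrier G \<and> N #> g = N #> t" using that by blast
    then show ?thesis unfolding rep_def by (rule someI_ex)
  qed
  define \<phi> where "\<phi> g = (N #> g, K #> (g \<otimes> inv (rep (N #> g))))" for g
  show ?thesis
  proof (rule fin_index_crit[where \<phi> = \<phi>])
    show "subgroup K G" by fact
    have "\<phi> ` carrier G \<subseteq> {N #> h | h. h \<in> carrier G} \<times> {K #> h | h. h \<in> N}"
    proof
      fix v assume "v \<in> \<phi> ` carrier G"
      then obtain g where g: "g \<in> carrier G" "v = \<phi> g" by blast
      have r1: "rep (N #> g) \<in> carrier G" "N #> rep (N #> g) = N #> g" using rp[OF g(1)] by auto
      have "g \<otimes> inv (rep (N #> g)) \<in> N" using rcos_eq_iff[OF N r1(1) g(1)] r1(2) by simp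
      then show "v \<in> {N #> h | h. h \<in> carrier G} \<times> {K #> h | h. h \<in> N}"
        using g unfolding \<phi>_def by blast
    qed
    then show "finite (\<phi> ` carrier G)"
      using f1 f2 unfolding finite_index_in_def by (meson finite_SigmaI finite_subset)
    fix x y assume xy: "x \<in> carrier G" "y \<in> carrier G" "\<phi> x = \<phi> y"
    have e: "(N #> x, K #> (x \<otimes> inv (rep (N #> x)))) = (N #> y, K #> (y \<otimes> inv (rep (N #> y))))"
      using xy(3) unfolding \<phi>_def .
    then have e1: "N #> x = N #> y" by simp
    have e2: "K #> (x \<otimes> inv (rep (N #> x))) = K #> (y \<otimes> inv (rep (N #> y)))" using arg_cong[OF e, of snd] by simp
    then have e2: "K #> (x \<otimes> inv (rep (N #> x))) = K #> (y \<otimes> inv (rep (N #> x)))" using e1 by simp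
    define t where "t = rep (N #> x)"
    have t: "t \<in> carrier G" using rp[OF xy(1)] unfolding t_def by simp
    have "(y \<otimes> inv t) \<otimes> inv (x \<otimes> inv t) \<in> K"
      using e2 rcos_eq_iff[OF K, of "x \<otimes> inv t" "y \<otimes> inv t"] t xy unfolding t_def by simp
    moreover have "(y \<otimes> inv t) \<otimes> inv (x \<otimes> inv t) = y \<otimes> inv x"
      using t xy by (simp add: inv_mult_group m_assoc)
    ultimately show "y \<otimes> inv x \<in> K" by simp
  qed
qed

end

context group begin
lemma core:
  assumes K: "subgroup K G" and f: "finite_index_in G K (carrier G)"
  shows "\<exists>N. subgroup N G \<and> conjc G N \<and> N \<subseteq> K \<and> finite_index_in G N (carrier G)"
proof -
  define N where "N = {g \<in> carrier G. \<forall>x\<in>carrier G. x \<otimes> g \<otimes> inv x \<in> K}"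
  obtain T where T: "finite T" "T \<subseteq> carrier G" "\<forall>x\<in>carrier G. \<exists>t\<in>T. K #> x = K #> t"
    using reps[OF f] by blast
  have NK: "N \<subseteq> K" unfolding N_def using one_closed by (metis (no_types, lifting) inv_one l_one mem_Collect_eq r_one subsetI one_closed)
  have sN: "subgroup N G"
  proof (rule subgroupI)
    show "N \<subseteq> carrier G" unfolding N_def by blast
    have "\<one> \<in> N" unfolding N_def using K by (simp add: subgroup.one_closed)
    then show "N \<noteq> {}" by blast
  next
    fix a assume a: "a \<in> N"
    have "x \<otimes> inv a \<otimes> inv x \<in> K" if x: "x \<in> carrier G" for x
    proof -
      have "inv (x \<otimes> a \<otimes> inv x) \<in> K" using a x K unfolding N_def by (simp add: subgroup.m_inv_closed)
      moreover have "inv (x \<otimes> a \<otimes> inv x) = x \<otimes> inv a \<otimes> inv x"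
        using a x unfolding N_def by (simp add: inv_mult_group m_assoc)
      ultimately show ?thesis by simp
    qed
    then show "inv a \<in> N" using a unfolding N_def by simp
  next
    fix a b assume ab: "a \<in> N" "b \<in> N"
    have "x \<otimes> (a \<otimes> b) \<otimes> inv x \<in> K" if x: "x \<in> carrier G" for x
    proof -
      have "(x \<otimes> a \<otimes> inv x) \<otimes> (x \<otimes> b \<otimes> inv x) \<in> K" using ab x K unfolding N_def by (simp add: subgroup.m_closed)
      moreover have "(x \<otimes> a \<otimes> inv x) \<otimes> (x \<otimes> b \<otimes> inv x) = x \<otimes> (a \<otimes> b) \<otimes> inv x"
        using ab x unfolding N_def by (simp add: m_assoc)
      ultimately show ?thesis by simp
    qed
    then show "a \<otimes> b \<in> N" using ab unfolding N_def by simp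
  qed
  have cN: "conjc G N" unfolding conjc_def
  proof (intro ballI)
    fix g n assume g: "g \<in> carrier G" and n: "n \<in> N"
    have "x \<otimes> (g \<otimes> n \<otimes> inv g) \<otimes> inv x \<in> K" if x: "x \<in> carrier G" for x
    proof -
      have "(x \<otimes> g) \<otimes> n \<otimes> inv (x \<otimes> g) \<in> K" using n x g unfolding N_def by simp
      moreover have "(x \<otimes> g) \<otimes> n \<otimes> inv (x \<otimes> g) = x \<otimes> (g \<otimes> n \<otimes> inv g) \<otimes> inv x"
        using n x g unfolding N_def by (simp add: m_assoc inv_mult_group)
      ultimately show ?thesis by simp
    qed
    then show "g \<otimes> n \<otimes> inv g \<in> N" using g n unfolding N_def by simp
  qed
  define \<phi> where "\<phi> g = (\<lambda>t\<in>T. K #> (t \<otimes> g))" for g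
  have fin: "finite (\<phi> ` carrier G)"
  proof (rule finite_subset)
    show "\<phi> ` carrier G \<subseteq> PiE T (\<lambda>_. {K #> h | h. h \<in> carrier G})"
      unfolding \<phi>_def using T(2) by (auto simp: PiE_def intro!: m_closed)
    show "finite (PiE T (\<lambda>_. {K #> h | h. h \<in> carrier G}))"
      using T(1) f unfolding finite_index_in_def by (simp add: finite_PiE)
  qed
  have fiN: "finite_index_in G N (carrier G)"
  proof (rule fin_index_crit[OF sN fin])
    fix g g' assume gg: "g \<in> carrier G" "g' \<in> carrier G" "\<phi> g = \<phi> g'"
    have "x \<otimes> (g' \<otimes> inv g) \<otimes> inv x \<in> K" if x: "x \<in> carrier G" for x
    proof -
      obtain t where t: "t \<in> T" "K #> x = K #> t" using T x by blast
      have tc: "t \<in> carrier G" using t T by blast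
      have "restrict (\<lambda>t. K #> (t \<otimes> g)) T t = restrict (\<lambda>t. K #> (t \<otimes> g')) T t"
        using gg(3) unfolding \<phi>_def by (rule fun_cong)
      then have "K #> (t \<otimes> g) = K #> (t \<otimes> g')" using t(1) by simp
      then have "(t \<otimes> g') \<otimes> inv (t \<otimes> g) \<in> K" using rcos_eq_iff[OF K] tc gg by simp
      moreover have "(t \<otimes> g') \<otimes> inv (t \<otimes> g) = t \<otimes> (g' \<otimes> inv g) \<otimes> inv t"
        using tc gg by (simp add: m_assoc inv_mult_group)
      ultimately have i1: "t \<otimes> (g' \<otimes> inv g) \<otimes> inv t \<in> K" by simp
      have i2: "x \<otimes> inv t \<in> K" using rcos_eq_iff[OF K tc x] t(2) by simp
      have "(x \<otimes> inv t) \<otimes> (t \<otimes> (g' \<otimes> inv g) \<otimes> inv t) \<otimes> inv (x \<otimes> inv t) \<in> K"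
        using i1 i2 K by (simp add: subgroup.m_closed subgroup.m_inv_closed)
      moreover have "(x \<otimes> inv t) \<otimes> (t \<otimes> (g' \<otimes> inv g) \<otimes> inv t) \<otimes> inv (x \<otimes> inv t) = x \<otimes> (g' \<otimes> inv g) \<otimes> inv x"
        using tc gg x by (simp add: m_assoc inv_mult_group)
      ultimately show ?thesis by simp
    qed
    then show "g' \<otimes> inv g \<in> N" using gg unfolding N_def by simp
  qed
  show ?thesis using sN cN NK fiN by blast
qed

end

context group begin

lemma lc_props:
  "subgroup (lower_central G k) G \<and> conjc G (lower_central G k) \<and> lower_central G (Suc k) \<subseteq> lower_central G k"
proof (induction k)
  case 0
  have s0: "subgroup (carrier G) G" by (rule subgroup_self)
  have c0: "conjc G (carrier G)" unfolding conjc_def by simp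
  have "lower_central G 1 \<subseteq> carrier G"
    by (simp add: comm_subgroup_def) (rule generate_incl, auto)
  then show ?case using s0 c0 by simp
next
  case (Suc k)
  define \<gamma> where "\<gamma> = lower_central G k"
  define C where "C = {h \<otimes> x \<otimes> inv h \<otimes> inv x | h x. h \<in> \<gamma> \<and> x \<in> carrier G}"
  have sg: "subgroup \<gamma> G" and cg: "conjc G \<gamma>" using Suc.IH unfolding \<gamma>_def by auto
  have gc: "\<gamma> \<subseteq> carrier G" using sg subgroup.subset by blast
  have eq1: "lower_central G (Suc k) = generate G C" unfolding \<gamma>_def C_def by (simp add: comm_subgroup_def)
  have Cc: "C \<subseteq> carrier G" unfolding C_def using gc by auto
  have Cg: "C \<subseteq> \<gamma>"
  proof
    fix c assume "c \<in> C"
    then obtain h x where hx: "h \<in> \<gamma>" "x \<in> carrier G" "c = h \<otimes> x \<otimes> inv h \<otimes> inv x" unfolding C_def by blast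
    have hc: "h \<in> carrier G" using hx gc by blast
    have "x \<otimes> inv h \<otimes> inv x \<in> \<gamma>" using cg hx sg unfolding conjc_def by (simp add: subgroup.m_inv_closed)
    then have "h \<otimes> (x \<otimes> inv h \<otimes> inv x) \<in> \<gamma>" using hx sg by (simp add: subgroup.m_closed)
    then show "c \<in> \<gamma>" using hx hc by (simp add: m_assoc)
  qed
  have s1: "subgroup (generate G C) G" using generate_is_subgroup[OF Cc] .
  have m1: "generate G C \<subseteq> \<gamma>" using generate_subgroup_incl[OF Cg sg] .
  have c1: "conjc G (generate G C)" unfolding conjc_def
  proof (intro ballI)
    fix q y assume q: "q \<in> carrier G" and y: "y \<in> generate G C"
    have yg: "y \<in> \<gamma>" using y m1 by blast
    have yc: "y \<in> carrier G" using yg gc by blast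
    have "y \<otimes> q \<otimes> inv y \<otimes> inv q \<in> C" unfolding C_def using yg q by blast
    then have "y \<otimes> q \<otimes> inv y \<otimes> inv q \<in> generate G C" by (rule generate.incl)
    then have "inv (y \<otimes> q \<otimes> inv y \<otimes> inv q) \<otimes> y \<in> generate G C"
      using s1 y by (simp add: subgroup.m_inv_closed subgroup.m_closed)
    moreover have "inv (y \<otimes> q \<otimes> inv y \<otimes> inv q) \<otimes> y = q \<otimes> y \<otimes> inv q"
      using q yc by (simp add: inv_mult_group m_assoc)
    ultimately show "q \<otimes> y \<otimes> inv q \<in> generate G C" by simp
  qed
  have "lower_central G (Suc (Suc k)) \<subseteq> lower_central G (Suc k)"
  proof -
    define C2 where "C2 = {h \<otimes> x \<otimes> inv h \<otimes> inv x | h x. h \<in> generate G C \<and> x \<in> carrier G}"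
    have "C2 \<subseteq> generate G C"
    proof
      fix c assume "c \<in> C2"
      then obtain h x where hx: "h \<in> generate G C" "x \<in> carrier G" "c = h \<otimes> x \<otimes> inv h \<otimes> inv x" unfolding C2_def by blast
      have hc: "h \<in> carrier G" using subgroup.mem_carrier[OF s1 hx(1)] .
      have "x \<otimes> inv h \<otimes> inv x \<in> generate G C" using c1 hx s1 unfolding conjc_def by (simp add: subgroup.m_inv_closed)
      then have "h \<otimes> (x \<otimes> inv h \<otimes> inv x) \<in> generate G C" using hx s1 by (simp add: subgroup.m_closed)
      then show "c \<in> generate G C" using hx hc by (simp add: m_assoc)
    qed
    then have "generate G C2 \<subseteq> generate G C" using generate_subgroup_incl s1 by blast
    then show ?thesis using eq1 unfolding C2_def by (simp add: comm_subgroup_def)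
  qed
  then show ?case using eq1 s1 c1 by simp
qed

end

context group begin
lemma contranormal_nilp:
  assumes lc: "lower_central G n = {\<one>}" and L: "subgroup L G"
    and cn: "\<And>M. subgroup M G \<Longrightarrow> L \<subseteq> M \<Longrightarrow> conjc G M \<Longrightarrow> M = carrier G"
  shows "L = carrier G"
proof -
  have Lc: "L \<subseteq> carrier G" using L subgroup.subset by blast
  have main: "\<forall>q\<in>carrier G. \<exists>l\<in>L. \<exists>c\<in>lower_central G k. q = l \<otimes> c" for k
  proof (induction k)
    case 0
    show ?case
    proof (intro ballI)
      fix q assume q: "q \<in> carrier G"
      have "\<one> \<in> L" using L by (rule subgroup.one_closed)
      moreover have "q \<in> lower_central G 0" using q by simp
      moreover have "q = \<one> \<otimes> q" using q by simp
      ultimately show "\<exists>l\<in>L. \<exists>c\<in>lower_central G 0. q = l \<otimes> c" by blast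
    qed
  next
    case (Suc k)
    define \<gamma> where "\<gamma> = lower_central G k"
    define \<delta> where "\<delta> = lower_central G (Suc k)"
    have sg: "subgroup \<gamma> G" and sd: "subgroup \<delta> G" and cd: "conjc G \<delta>"
      using lc_props[of k] lc_props[of "Suc k"] unfolding \<gamma>_def \<delta>_def by auto
    have gc: "\<gamma> \<subseteq> carrier G" using sg subgroup.subset by blast
    have dc: "\<delta> \<subseteq> carrier G" using sd subgroup.subset by blast
    define M where "M = {a \<otimes> n | a n. a \<in> L \<and> n \<in> \<delta>}"
    have sM: "subgroup M G" unfolding M_def by (rule subgroup_prod[OF L sd cd])
    have LM: "L \<subseteq> M"
    proof
      fix l assume "l \<in> L"
      moreover have "l = l \<otimes> \<one>" using \<open>l \<in> L\<close> Lc by auto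
      ultimately show "l \<in> M" unfolding M_def using sd subgroup.one_closed by blast
    qed
    have dM: "\<delta> \<subseteq> M"
    proof
      fix d assume "d \<in> \<delta>"
      moreover have "d = \<one> \<otimes> d" using \<open>d \<in> \<delta>\<close> dc by auto
      ultimately show "d \<in> M" unfolding M_def using L subgroup.one_closed by blast
    qed
    have cM: "conjc G M" unfolding conjc_def
    proof (intro ballI)
      fix q y assume q: "q \<in> carrier G" and y: "y \<in> M"
      obtain l c where lc': "l \<in> L" "c \<in> \<delta>" "y = l \<otimes> c" using y unfolding M_def by blast
      obtain l' c' where lc2: "l' \<in> L" "c' \<in> \<gamma>" "q = l' \<otimes> c'" using Suc.IH q unfolding \<gamma>_def by blast
      have lcar: "l \<in> carrier G" "l' \<in> carrier G" using lc' lc2 Lc by auto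
      have ccar: "c \<in> carrier G" "c' \<in> carrier G" using lc' lc2 gc dc by auto
      define x where "x = c' \<otimes> l \<otimes> inv c' \<otimes> inv l"
      have xd: "x \<in> \<delta>" unfolding x_def \<delta>_def \<gamma>_def
        using lc2(2) lcar unfolding \<gamma>_def by (simp add: comm_subgroup_def generate.incl, intro generate.incl, blast)
      have "l' \<otimes> x \<otimes> l \<otimes> inv l' \<otimes> (q \<otimes> c \<otimes> inv q) \<in> M"
      proof -
        have "l' \<in> M" "l \<in> M" "inv l' \<in> M" using lc' lc2 LM L by (auto simp: subgroup.m_inv_closed)
        moreover have "x \<in> M" using xd dM by blast
        moreover have "q \<otimes> c \<otimes> inv q \<in> M" using cd q lc'(2) dM unfolding conjc_def by blast
        ultimately show ?thesis using sM by (simp add: subgroup.m_closed)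
      qed
      moreover have "l' \<otimes> x \<otimes> l \<otimes> inv l' \<otimes> (q \<otimes> c \<otimes> inv q) = q \<otimes> y \<otimes> inv q"
        unfolding x_def lc2(3) lc'(3) using lcar ccar by (simp add: m_assoc inv_mult_group)
      ultimately show "q \<otimes> y \<otimes> inv q \<in> M" by simp
    qed
    have "M = carrier G" using cn[OF sM LM cM] .
    then show ?case unfolding M_def \<delta>_def by blast
  qed
  show ?thesis
  proof
    show "L \<subseteq> carrier G" by fact
    show "carrier G \<subseteq> L"
    proof
      fix q assume q: "q \<in> carrier G"
      obtain l c where "l \<in> L" "c \<in> lower_central G n" "q = l \<otimes> c" using main[of n] q by blast
      then show "q \<in> L" using lc Lc by auto
    qed
  qed
qed

end

context group begin

lemma key:
  assumes ln: "locally_nilpotent G" and fH: "finite H" and sH: "subgroup H G"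
    and cnH: "normal_closure G H = carrier G"
    and sN: "subgroup N G" and cN: "conjc G N" and fN: "finite_index_in G N (carrier G)"
    and g: "g \<in> carrier G"
  shows "\<exists>h\<in>H. \<exists>n\<in>N. g = h \<otimes> n"
proof -
  obtain T where T: "finite T" "T \<subseteq> carrier G" "\<forall>x\<in>carrier G. \<exists>t\<in>T. N #> x = N #> t"
    using reps[OF fN] by blast
  have Hc: "H \<subseteq> carrier G" using sH subgroup.subset by blast
  have Nc: "N \<subseteq> carrier G" using sN subgroup.subset by blast
  define S where "S = T \<union> H"
  have Sc: "S \<subseteq> carrier G" and fS: "finite S" using T Hc fH unfolding S_def by auto
  define Qg where "Qg = subgroup_generated G S"
  have "nilpotent_group Qg" using ln Sc fS unfolding locally_nilpotent_def Qg_def by blast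
  then obtain n where lcn: "lower_central Qg n = {\<one>\<^bsub>Qg\<^esub>}" unfolding nilpotent_group_def by blast
  define Q where "Q = carrier Qg"
  have Qeq: "Q = generate G S" unfolding Q_def Qg_def carrier_subgroup_generated using Sc
    by (simp add: Int_absorb1)
  have sQ: "subgroup Q G" unfolding Qeq by (rule generate_is_subgroup[OF Sc])
  have Qc: "Q \<subseteq> carrier G" using sQ subgroup.subset by blast
  have SQ: "S \<subseteq> Q" unfolding Qeq by (blast intro: generate.incl)
  define L where "L = generate G (H \<union> (Q \<inter> N))"
  have HQN: "H \<union> (Q \<inter> N) \<subseteq> carrier G" using Hc Qc by blast
  have sL: "subgroup L G" unfolding L_def by (rule generate_is_subgroup[OF HQN])
  have LQ: "L \<subseteq> Q" unfolding L_def by (rule generate_subgroup_incl) (use SQ sQ in \<open>auto simp: S_def\<close>)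
  have incL: "H \<union> (Q \<inter> N) \<subseteq> L" unfolding L_def by (blast intro: generate.incl)
  have sLQ: "subgroup L Qg" using subgroup_subgroup_generated_iff sL LQ unfolding Qg_def Q_def by blast
  have grpQ: "group Qg" unfolding Qg_def by simp
  have multQ: "x \<otimes>\<^bsub>Qg\<^esub> y = x \<otimes> y" for x y unfolding Qg_def by simp
  have invQ: "inv\<^bsub>Qg\<^esub> x = inv x" if "x \<in> Q" for x using that unfolding Qg_def Q_def by simp
  have tQ: "\<exists>t\<in>T. t \<in> Q \<and> t \<in> carrier G \<and> x \<otimes> inv t \<in> N" if x: "x \<in> carrier G" for x
  proof -
    obtain t where t: "t \<in> T" "N #> x = N #> t" using T(3) x by blast
    have tc: "t \<in> carrier G" using t(1) T(2) by blast
    have "x \<otimes> inv t \<in> N" using rcos_eq_iff[OF sN tc x] t(2) by simp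
    moreover have "t \<in> Q" using t(1) SQ unfolding S_def by blast
    ultimately show ?thesis using t tc by blast
  qed
  have LeqQ: "L = carrier Qg"
  proof (rule group.contranormal_nilp[OF grpQ lcn sLQ])
    fix M assume sMQ: "subgroup M Qg" and LM: "L \<subseteq> M" and cM: "conjc Qg M"
    have sM: "subgroup M G" and MQ: "M \<subseteq> Q"
      using sMQ subgroup_subgroup_generated_iff unfolding Qg_def Q_def by blast+
    have cM': "q \<otimes> m \<otimes> inv q \<in> M" if "q \<in> Q" "m \<in> M" for q m
      using cM that unfolding conjc_def Q_def[symmetric] by (simp add: multQ invQ)
    define XX where "XX = {m \<otimes> n | m n. m \<in> M \<and> n \<in> N}"
    have sX: "subgroup XX G" unfolding XX_def by (rule subgroup_prod[OF sM sN cN])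
    have conjX: "{x \<otimes> h \<otimes> inv x | x h. x \<in> carrier G \<and> h \<in> H} \<subseteq> XX"
    proof
      fix z assume "z \<in> {x \<otimes> h \<otimes> inv x | x h. x \<in> carrier G \<and> h \<in> H}"
      then obtain x h where xh: "x \<in> carrier G" "h \<in> H" "z = x \<otimes> h \<otimes> inv x" by blast
      obtain t where t: "t \<in> Q" "t \<in> carrier G" "x \<otimes> inv t \<in> N" using tQ[OF xh(1)] by blast
      define m where "m = x \<otimes> inv t"
      have mc: "m \<in> carrier G" using m_def xh t by simp
      have xe: "x = m \<otimes> t" unfolding m_def using xh t by (simp add: m_assoc)
      have hc: "h \<in> carrier G" using xh Hc by blast
      define y where "y = t \<otimes> h \<otimes> inv t"
      have yc: "y \<in> carrier G" unfolding y_def using t hc by simp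
      have yM: "y \<in> M" unfolding y_def using cM' t(1) xh(2) incL LM by blast
      have "inv y \<otimes> m \<otimes> inv (inv y) \<in> N" using cN yc t(3) unfolding conjc_def m_def by (meson inv_closed)
      then have "(inv y \<otimes> m \<otimes> y) \<otimes> inv m \<in> N" using sN t(3) yc unfolding m_def
        by (simp add: subgroup.m_closed subgroup.m_inv_closed)
      moreover have "z = y \<otimes> ((inv y \<otimes> m \<otimes> y) \<otimes> inv m)"
        unfolding xh(3) xe y_def using mc t hc by (simp add: m_assoc inv_mult_group)
      ultimately show "z \<in> XX" unfolding XX_def using yM by blast
    qed
    have "carrier G \<subseteq> XX" using cnH generate_subgroup_incl[OF conjX sX]
      unfolding normal_closure_def by simp
    have "Q \<subseteq> M"
    proof
      fix q assume q: "q \<in> Q"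
      then have "q \<in> XX" using Qc \<open>carrier G \<subseteq> XX\<close> by blast
      then obtain m n' where mn: "m \<in> M" "n' \<in> N" "q = m \<otimes> n'" unfolding XX_def by blast
      have mc: "m \<in> carrier G" using mn MQ Qc by blast
      have nc: "n' \<in> carrier G" using mn Nc by blast
      have "n' = inv m \<otimes> q" using mn mc nc by simp
      moreover have "inv m \<otimes> q \<in> Q" using sQ q mn MQ by (blast intro: subgroup.m_closed subgroup.m_inv_closed)
      ultimately have "n' \<in> M" using mn incL LM by blast
      then show "q \<in> M" using mn sM by (simp add: subgroup.m_closed)
    qed
    then show "M = carrier Qg" using MQ unfolding Q_def by blast
  qed
  define YY where "YY = {h \<otimes> n | h n. h \<in> H \<and> n \<in> N}"
  have sY: "subgroup YY G" unfolding YY_def by (rule subgroup_prod[OF sH sN cN])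
  have "H \<union> (Q \<inter> N) \<subseteq> YY"
  proof
    fix z assume z: "z \<in> H \<union> (Q \<inter> N)"
    show "z \<in> YY"
    proof (cases "z \<in> H")
      case True
      then have "z = z \<otimes> \<one>" using Hc by auto
      then show ?thesis unfolding YY_def using True sN subgroup.one_closed by blast
    next
      case False
      then have zN: "z \<in> N" using z by blast
      then have "z = \<one> \<otimes> z" using Nc by auto
      then show ?thesis unfolding YY_def using zN sH subgroup.one_closed by blast
    qed
  qed
  then have LY: "L \<subseteq> YY" unfolding L_def by (rule generate_subgroup_incl[OF _ sY])
  obtain t where t: "t \<in> Q" "t \<in> carrier G" "g \<otimes> inv t \<in> N" using tQ[OF g] by blast
  have "t \<in> YY" using t(1) LeqQ LY unfolding Q_def by blast
  then obtain h n' where hn: "h \<in> H" "n' \<in> N" "t = h \<otimes> n'" unfolding YY_def by blast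
  define m where "m = g \<otimes> inv t"
  have hc: "h \<in> carrier G" "n' \<in> carrier G" using hn Hc Nc by auto
  have mc: "m \<in> carrier G" using m_def g t by simp
  have ge: "g = m \<otimes> t" unfolding m_def using g t by (simp add: m_assoc)
  have "inv h \<otimes> m \<otimes> inv (inv h) \<in> N" using cN hc t(3) unfolding conjc_def m_def by (meson inv_closed)
  then have "(inv h \<otimes> m \<otimes> h) \<otimes> n' \<in> N" using sN hn hc by (simp add: subgroup.m_closed)
  moreover have "g = h \<otimes> ((inv h \<otimes> m \<otimes> h) \<otimes> n')" unfolding ge hn(3) using hc mc by (simp add: m_assoc)
  ultimately show ?thesis using hn(1) by blast
qed

end


theorem lemma3p3:
  fixes G (structure)
  assumes "group G"
    and "periodic_group G"
    and "locally_nilpotent G"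
    and "\<exists>H. finite H \<and> contranormal G H"
  shows "finite_index_in G (F_perfect_part G) (carrier G)"
proof -
  interpret group G by fact
  obtain H where fH: "finite H" and cH: "contranormal G H" using assms(4) by blast
  have sH: "subgroup H G" and cnH: "normal_closure G H = carrier G" using cH unfolding contranormal_def by auto
  define NN where "NN = {N. subgroup N G \<and> conjc G N \<and> finite_index_in G N (carrier G)}"
  have GN: "carrier G \<in> NN"
  proof -
    have "finite_index_in G (carrier G) (carrier G)"
    proof (rule fin_index_crit[where \<phi> = "\<lambda>_. ()"])
      show "subgroup (carrier G) G" by (rule subgroup_self)
      show "finite ((\<lambda>_. ()) ` carrier G)" by simp
    qed simp
    moreover have "conjc G (carrier G)" unfolding conjc_def by simp
    ultimately show ?thesis unfolding NN_def using subgroup_self by blast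
  qed
  obtain N0 where N0: "N0 \<in> NN" and mn: "\<forall>N. N \<in> NN \<longrightarrow> card (H \<inter> N0) \<le> card (H \<inter> N)"
    using ex_has_least_nat[of "\<lambda>N. N \<in> NN" "carrier G" "\<lambda>N. card (H \<inter> N)"] GN by blast
  have sN0: "subgroup N0 G" and cN0: "conjc G N0" and fN0: "finite_index_in G N0 (carrier G)"
    using N0 unfolding NN_def by auto
  have minimal: "N0 \<subseteq> N" if N: "N \<in> NN" for N
  proof -
    have sN: "subgroup N G" and cN: "conjc G N" and fN: "finite_index_in G N (carrier G)"
      using N unfolding NN_def by auto
    define M where "M = N0 \<inter> N"
    have sM: "subgroup M G" unfolding M_def using sN0 sN by (rule subgroups_Inter_pair)
    have cM: "conjc G M" using cN0 cN unfolding conjc_def M_def by blast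
    have fM: "finite_index_in G M (carrier G)" unfolding M_def using sN0 sN fN0 fN by (rule fin_index_Int)
    have "M \<in> NN" unfolding NN_def using sM cM fM by blast
    then have "card (H \<inter> N0) \<le> card (H \<inter> M)" using mn by blast
    moreover have "H \<inter> M \<subseteq> H \<inter> N0" unfolding M_def by blast
    ultimately have HM: "H \<inter> M = H \<inter> N0" using fH by (meson card_seteq finite_Int)
    show "N0 \<subseteq> N"
    proof
      fix x assume x: "x \<in> N0"
      have xc: "x \<in> carrier G" using x sN0 subgroup.mem_carrier by metis
      obtain h m where hm: "h \<in> H" "m \<in> M" "x = h \<otimes> m"
        using key[OF assms(3) fH sH cnH sM cM fM xc] by blast
      have mc: "m \<in> carrier G" using subgroup.mem_carrier[OF sM hm(2)] .
      have hc: "h \<in> carrier G" using subgroup.mem_carrier[OF sH hm(1)] .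
      have "h = x \<otimes> inv m" using hm mc hc by (simp add: m_assoc)
      moreover have "x \<otimes> inv m \<in> N0" using x hm(2) sN0 unfolding M_def
        by (simp add: subgroup.m_closed subgroup.m_inv_closed)
      ultimately have "h \<in> H \<inter> N0" using hm by blast
      then have "h \<in> M" using HM by blast
      then have "x \<in> M" using hm sM by (simp add: subgroup.m_closed)
      then show "x \<in> N" unfolding M_def by blast
    qed
  qed
  have Fp: "F_perfect G N0" unfolding F_perfect_def
  proof (intro conjI allI impI)
    show "subgroup N0 G" by fact
    fix K assume K: "subgroup K G \<and> K \<subseteq> N0 \<and> finite_index_in G K N0"
    then have fK: "finite_index_in G K (carrier G)" using fin_index_trans[OF _ sN0 _ _ fN0] by blast
    obtain N where N: "subgroup N G" "conjc G N" "N \<subseteq> K" "finite_index_in G N (carrier G)"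
      using core[OF _ fK] K by blast
    have "N \<in> NN" unfolding NN_def using N by blast
    then have "N0 \<subseteq> N" by (rule minimal)
    then show "K = N0" using K N by blast
  qed
  have U: "\<Union>{H. F_perfect G H} \<subseteq> carrier G"
    unfolding F_perfect_def using subgroup.subset by blast
  have sP: "subgroup (F_perfect_part G) G" unfolding F_perfect_part_def by (rule generate_is_subgroup[OF U])
  have "N0 \<subseteq> F_perfect_part G" unfolding F_perfect_part_def using Fp by (blast intro: generate.incl)
  then show ?thesis using fin_index_super[OF sN0 sP _ fN0] by blast
qed


end
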